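(* Let $E_1,\dots,E_m$ be mutually independent events on a probability space, and for $\mathcal S\subseteq[m]$ let $U(\mathcal S)=\mathbf P\big(\bigcup_{i\in\mathcal S}E_i\big)$. Let $1\le k\le m$ and let $\mathcal S_G=\{f_1,\dots,f_k\}$ be a greedy solution, defined by $\mathcal S_G^0=\emptyset$, $\mathcal S_G^i=\mathcal S_G^{i-1}\cup\{f_i\}$, where $$f_i\in\arg\max_{f\in[m]\setminus\mathcal S_G^{i-1}}\Big(U(\mathcal S_G^{i-1}\cup\{f\})-U(\mathcal S_G^{i-1})\Big),\quad 1\le i\le k,$$ and $\mathcal S_G=\mathcal S_G^k$. Then $\mathcal S_G$ maximizes $U(\mathcal S)$ over all $\mathcal S\subseteq[m]$ with $|\mathcal S|=k$, i.e. $\mathcal S_G$ equals an optimal $k$-element solution. *)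

theory Defs
  imports "HOL-Probability.Probability"
begin

definition union_prob :: "'a measure \<Rightarrow> (nat \<Rightarrow> 'a set) \<Rightarrow> nat set \<Rightarrow> real" where
  "union_prob M E S = measure M (\<Union>i\<in>S. E i)"

definition greedy_seq :: "'a measure \<Rightarrow> (nat \<Rightarrow> 'a set) \<Rightarrow> nat \<Rightarrow> nat \<Rightarrow> (nat \<Rightarrow> nat) \<Rightarrow> bool" where
  "greedy_seq M E m k f \<longleftrightarrow>
     (\<forall>i\<in>{1..k}.
        f i \<in> {1..m} - f ` {1..<i} \<and>
        (\<forall>g\<in>{1..m} - f ` {1..<i}.
           union_prob M E (f ` {1..<i} \<union> {g}) - union_prob M E (f ` {1..<i})
             \<le> union_prob M E (f ` {1..<i} \<union> {f i}) - union_prob M E (f ` {1..<i})))"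

end

theory Submission
  imports Defs
begin

lemma union_prob_indep:
  assumes P: "prob_space M"
    and ev: "\<And>i. i \<in> I \<Longrightarrow> E i \<in> sets M"
    and ind: "prob_space.indep_events M E I"
    and S: "S \<subseteq> I" "finite S"
  shows "union_prob M E S = 1 - (\<Prod>i\<in>S. 1 - measure M (E i))"
proof (cases "S = {}")
  case True then show ?thesis by (simp add: union_prob_def)
next
  case False
  interpret prob_space M by (rule P)
  have is1: "indep_sets (\<lambda>i. {E i}) I" using ind by (simp add: indep_events_def_alt)
  have is2: "indep_sets (\<lambda>i. sigma_sets (space M) {E i}) I"
    by (rule indep_sets_sigma[OF is1]) (auto simp: Int_stable_def)
  have "prob (\<Inter>j\<in>S. space M - E j) = (\<Prod>j\<in>S. prob (space M - E j))"
    by (rule indep_setsD[OF is2 S(1) False S(2)])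
       (auto intro: sigma_sets.Compl sigma_sets.Basic)
  also have "\<dots> = (\<Prod>j\<in>S. 1 - prob (E j))"
    using S ev by (intro prod.cong) (auto simp: prob_compl)
  finally have h: "prob (\<Inter>j\<in>S. space M - E j) = (\<Prod>j\<in>S. 1 - prob (E j))" .
  have eq: "(\<Union>i\<in>S. E i) = space M - (\<Inter>j\<in>S. space M - E j)"
    using S ev False sets.sets_into_space by blast
  have "(\<Inter>j\<in>S. space M - E j) \<in> events"
    using S ev False by (intro sets.finite_INT) auto
  then have "prob (\<Union>i\<in>S. E i) = 1 - prob (\<Inter>j\<in>S. space M - E j)"
    unfolding eq by (simp add: prob_compl)
  then show ?thesis using h by (simp add: union_prob_def)
qed

lemma comb:
  fixes q :: "nat \<Rightarrow> real"
  assumes q0: "\<And>i. i \<in> {1..m} \<Longrightarrow> 0 \<le> q i"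
    and gr: "\<And>i. i \<in> {1..k} \<Longrightarrow> f i \<in> {1..m} - f ` {1..<i} \<and>
        (\<forall>g\<in>{1..m} - f ` {1..<i}. (\<Prod>j\<in>f ` {1..<i}. q j) * (1 - q g)
            \<le> (\<Prod>j\<in>f ` {1..<i}. q j) * (1 - q (f i)))"
  shows "\<forall>S. S \<subseteq> {1..m} \<and> card S = k \<longrightarrow> (\<Prod>j\<in>f ` {1..k}. q j) \<le> (\<Prod>j\<in>S. q j)"
  using gr
proof (induction k)
  case 0
  show ?case
  proof (intro allI impI)
    fix S :: "nat set" assume "S \<subseteq> {1..m} \<and> card S = 0"
    then have "S = {}" using finite_subset[of S "{1..m}"] by auto
    then show "(\<Prod>j\<in>f ` {1..0}. q j) \<le> (\<Prod>j\<in>S. q j)" by simp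
  qed
next
  case (Suc k)
  have IH: "\<forall>S. S \<subseteq> {1..m} \<and> card S = k \<longrightarrow> (\<Prod>j\<in>f ` {1..k}. q j) \<le> (\<Prod>j\<in>S. q j)"
    using Suc.prems by (intro Suc.IH) auto
  have G: "f (Suc k) \<in> {1..m} - f ` {1..k} \<and>
        (\<forall>g\<in>{1..m} - f ` {1..k}. (\<Prod>j\<in>f ` {1..k}. q j) * (1 - q g)
            \<le> (\<Prod>j\<in>f ` {1..k}. q j) * (1 - q (f (Suc k))))"
    using Suc.prems[of "Suc k"] by (simp add: atLeastLessThanSuc_atLeastAtMost)
  have Fsub: "f ` {1..k} \<subseteq> {1..m}"
    using Suc.prems by (force simp: atLeastLessThanSuc_atLeastAtMost)
  show ?case
  proof (intro allI impI)
    fix S assume SS: "S \<subseteq> {1..m} \<and> card S = Suc k"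
    have finS: "finite S" using SS finite_subset by blast
    have "card (f ` {1..k}) \<le> k" using card_image_le[of "{1..k}" f] by simp
    then have "\<not> S \<subseteq> f ` {1..k}" using SS card_mono[of "f ` {1..k}" S] by auto
    then obtain s where s: "s \<in> S" "s \<notin> f ` {1..k}" by blast
    have Ss: "S - {s} \<subseteq> {1..m} \<and> card (S - {s}) = k" using SS s by auto
    have ih: "(\<Prod>j\<in>f ` {1..k}. q j) \<le> (\<Prod>j\<in>S - {s}. q j)" using IH Ss by blast
    have fim: "f ` {1..Suc k} = insert (f (Suc k)) (f ` {1..k})"
      by (simp add: atLeastAtMostSuc_conv)
    have QF: "(\<Prod>j\<in>f ` {1..Suc k}. q j) = q (f (Suc k)) * (\<Prod>j\<in>f ` {1..k}. q j)"
      unfolding fim using G by (simp add: prod.insert)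
    have QS: "(\<Prod>j\<in>S. q j) = q s * (\<Prod>j\<in>S - {s}. q j)"
      using finS s(1) by (simp add: prod.remove)
    have Fnn: "0 \<le> (\<Prod>j\<in>f ` {1..k}. q j)" using Fsub q0 by (intro prod_nonneg) auto
    have Snn: "0 \<le> (\<Prod>j\<in>S. q j)" using SS q0 by (intro prod_nonneg) auto
    have S'nn: "0 \<le> (\<Prod>j\<in>S - {s}. q j)" using SS q0 by (intro prod_nonneg) auto
    show "(\<Prod>j\<in>f ` {1..Suc k}. q j) \<le> (\<Prod>j\<in>S. q j)"
    proof (cases "(\<Prod>j\<in>f ` {1..k}. q j) = 0")
      case True then show ?thesis using QF Snn by (simp only: True mult_zero_right)
    next
      case False
      then have pos: "0 < (\<Prod>j\<in>f ` {1..k}. q j)" using Fnn False by linarith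
      have "s \<in> {1..m} - f ` {1..k}" using s SS by auto
      then have "(\<Prod>j\<in>f ` {1..k}. q j) * (1 - q s) \<le> (\<Prod>j\<in>f ` {1..k}. q j) * (1 - q (f (Suc k)))"
        using G by blast
      then have le: "q (f (Suc k)) \<le> q s" using pos by (simp add: mult_le_cancel_left)
      have "q (f (Suc k)) * (\<Prod>j\<in>f ` {1..k}. q j) \<le> q s * (\<Prod>j\<in>S - {s}. q j)"
        using le ih Fnn q0[of s] s SS by (intro mult_mono) auto
      then show ?thesis using QF QS by simp
    qed
  qed
qed

theorem lemma2:
  fixes M :: "'a measure" and E :: "nat \<Rightarrow> 'a set" and m k :: nat and f :: "nat \<Rightarrow> nat"
  assumes "prob_space M"
    and "\<And>i. i \<in> {1..m} \<Longrightarrow> E i \<in> sets M"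
    and "prob_space.indep_events M E {1..m}"
    and "1 \<le> k" and "k \<le> m"
    and "greedy_seq M E m k f"
  shows "f ` {1..k} \<subseteq> {1..m} \<and> card (f ` {1..k}) = k \<and>
         (\<forall>S. S \<subseteq> {1..m} \<and> card S = k \<longrightarrow> union_prob M E S \<le> union_prob M E (f ` {1..k}))"
proof -
  interpret prob_space M by (rule assms(1))
  define q where "q i = 1 - prob (E i)" for i
  have U: "union_prob M E S = 1 - (\<Prod>i\<in>S. q i)" if "S \<subseteq> {1..m}" for S
    unfolding q_def using union_prob_indep[OF assms(1) assms(2) assms(3) that] that
      finite_subset by blast
  have gs: "f i \<in> {1..m} - f ` {1..<i}" if "i \<in> {1..k}" for i
    using assms(6) that unfolding greedy_seq_def by blast
  have sub: "f ` {1..k} \<subseteq> {1..m}" using gs by blast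
  have inj: "inj_on f {1..k}"
  proof (rule inj_onI, rule ccontr)
    fix a b assume ab: "a \<in> {1..k}" "b \<in> {1..k}" "f a = f b" "a \<noteq> b"
    show False
    proof (cases "a < b")
      case True
      then have "f a \<in> f ` {1..<b}" using ab by (intro imageI) auto
      then show ?thesis using gs[OF ab(2)] ab by auto
    next
      case False
      then have "f b \<in> f ` {1..<a}" using ab by (intro imageI) auto
      then show ?thesis using gs[OF ab(1)] ab by auto
    qed
  qed
  have card: "card (f ` {1..k}) = k" using card_image[OF inj] by simp
  have q0: "0 \<le> q i" for i unfolding q_def by simp
  have gr: "f i \<in> {1..m} - f ` {1..<i} \<and>
        (\<forall>g\<in>{1..m} - f ` {1..<i}. (\<Prod>j\<in>f ` {1..<i}. q j) * (1 - q g)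
            \<le> (\<Prod>j\<in>f ` {1..<i}. q j) * (1 - q (f i)))" if i: "i \<in> {1..k}" for i
  proof -
    let ?T = "f ` {1..<i}"
    have Tsub: "?T \<subseteq> {1..m}" using gs i by force
    have fT: "finite ?T" by simp
    have gain: "union_prob M E (?T \<union> {g}) - union_prob M E ?T = (\<Prod>j\<in>?T. q j) * (1 - q g)"
      if g: "g \<in> {1..m} - ?T" for g
    proof -
      have "union_prob M E (?T \<union> {g}) = 1 - q g * (\<Prod>j\<in>?T. q j)"
        using U[of "?T \<union> {g}"] Tsub g by (simp add: prod.insert)
      then show ?thesis using U[OF Tsub] by (simp add: algebra_simps)
    qed
    have "\<forall>g\<in>{1..m} - ?T. union_prob M E (?T \<union> {g}) - union_prob M E ?T
             \<le> union_prob M E (?T \<union> {f i}) - union_prob M E ?T"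
      using assms(6) i unfolding greedy_seq_def by blast
    then have "\<forall>g\<in>{1..m} - ?T. (\<Prod>j\<in>?T. q j) * (1 - q g) \<le> (\<Prod>j\<in>?T. q j) * (1 - q (f i))"
      using gain[of g] gain[of "f i"] gs[OF i] by (metis gain)
    then show ?thesis using gs[OF i] by blast
  qed
  have opt: "\<forall>S. S \<subseteq> {1..m} \<and> card S = k \<longrightarrow> (\<Prod>j\<in>f ` {1..k}. q j) \<le> (\<Prod>j\<in>S. q j)"
    by (rule comb[OF q0 gr])
  show ?thesis using sub card opt U sub by auto
qed

end
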